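(* Let $n>30$ with $n\equiv 0\pmod 6$, and let $\mathcal{H}$ and $\Pi$ be as defined in the context. Let $M$ be a maximal subgroup of $S_n$ that is imprimitive (i.e. the stabilizer of a partition of $\{1,\dots,n\}$ into $\ell$ blocks of size $k$, with $k\ell=n$, $k,\ell\ge 2$) and $M\notin\mathcal{H}$. Then $|M\cap\Pi|<|H\cap\Pi|$ for every $H\in\mathcal{H}$.
   Context: $S_n$ is the symmetric group on $\{1,\dots,n\}$, $n\equiv 0\pmod 6$. $\mathcal{H}$ consists of: all stabilizers in $S_n$ of partitions of $\{1,\dots,n\}$ into two blocks of size $n/2$ (a stabilizer may swap the blocks); $A_n$; and, for $1\le i\le n/3-1$, all setwise stabilizers of $i$-element subsets. $\Pi=\bigcup_{i=-1}^{n/3-1}\Pi_i$ where (cycle lengths listed account for all $n$ points): $\Pi_{-1}$ = $n$-cycles; $\Pi_0$ = products of two disjoint cycles of lengths $n/2-1,n/2+1$ if $n/2$ is even, resp. $n/2-2,n/2+2$ if $n/2$ is odd; $\Pi_1$ = elements with exactly one fixed point and two further cycles of lengths $n/2-2,n/2+1$; for odd $3\le i\le n/3-1$, $\Pi_i$ = products of three disjoint cycles of lengths $i,(n-i-1)/2,(n-i+1)/2$; for even $2\le i\le n/3-1$ with $(n-i)/2$ odd, lengths $i,(n-i)/2,(n-i)/2$; for even $4\le i\le n/3-1$ with $(n-i)/2$ even, lengths $i,(n-i)/2-1,(n-i)/2+1$; if $(n-2)/2$ is even, $\Pi_2$ has lengths $2,n/2-4,n/2+2$. *)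

theory Defs
  imports "HOL-Algebra.Sym_Groups" "HOL-Combinatorics.Orbits" "HOL-Library.Multiset" "HOL-Library.Disjoint_Sets"
begin

text \<open>S_n is sym_group n, acting on {1..n}; A_n is carrier (alt_group n).\<close>

definition maximal_subgroup :: "('a, 'b) monoid_scheme \<Rightarrow> 'a set \<Rightarrow> bool" where
  "maximal_subgroup G M \<longleftrightarrow> subgroup M G \<and> M \<noteq> carrier G \<and>
     (\<forall>K. subgroup K G \<and> M \<subseteq> K \<longrightarrow> K = M \<or> K = carrier G)"

text \<open>Cycle type of a permutation of {1..n}: multiset of the lengths of its cycles
  (fixed points counted as cycles of length 1).\<close>
definition cycle_type :: "nat \<Rightarrow> (nat \<Rightarrow> nat) \<Rightarrow> nat multiset" where
  "cycle_type n p = image_mset card (mset_set ((\<lambda>x. orbit p x) ` {1..n}))"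

definition partition_stabilizer :: "nat \<Rightarrow> nat set set \<Rightarrow> (nat \<Rightarrow> nat) set" where
  "partition_stabilizer n P = {p \<in> carrier (sym_group n). \<forall>B\<in>P. p ` B \<in> P}"

definition set_stabilizer :: "nat \<Rightarrow> nat set \<Rightarrow> (nat \<Rightarrow> nat) set" where
  "set_stabilizer n A = {p \<in> carrier (sym_group n). p ` A = A}"

definition block_partition :: "nat \<Rightarrow> nat \<Rightarrow> nat \<Rightarrow> nat set set \<Rightarrow> bool" where
  "block_partition n k l P \<longleftrightarrow> partition_on {1..n} P \<and> card P = l \<and> (\<forall>B\<in>P. card B = k)"

definition imprimitive_stab :: "nat \<Rightarrow> (nat \<Rightarrow> nat) set \<Rightarrow> bool" where
  "imprimitive_stab n M \<longleftrightarrow> (\<exists>k l P. k * l = n \<and> 2 \<le> k \<and> 2 \<le> l \<and>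
      block_partition n k l P \<and> M = partition_stabilizer n P)"

definition calH :: "nat \<Rightarrow> (nat \<Rightarrow> nat) set set" where
  "calH n = {partition_stabilizer n P | P. block_partition n (n div 2) 2 P}
          \<union> {carrier (alt_group n)}
          \<union> {set_stabilizer n A | A. A \<subseteq> {1..n} \<and> 1 \<le> card A \<and> card A \<le> n div 3 - 1}"

definition Pi_types :: "nat \<Rightarrow> nat multiset set" where
  "Pi_types n =
     {{#n#}}
   \<union> {if even (n div 2) then {#n div 2 - 1, n div 2 + 1#} else {#n div 2 - 2, n div 2 + 2#}}
   \<union> {{#1, n div 2 - 2, n div 2 + 1#}}
   \<union> {{#i, (n - i - 1) div 2, (n - i + 1) div 2#} | i. odd i \<and> 3 \<le> i \<and> i \<le> n div 3 - 1}
   \<union> {{#i, (n - i) div 2, (n - i) div 2#} | i. even i \<and> 2 \<le> i \<and> i \<le> n div 3 - 1 \<and> odd ((n - i) div 2)}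
   \<union> {{#i, (n - i) div 2 - 1, (n - i) div 2 + 1#} | i. even i \<and> 4 \<le> i \<and> i \<le> n div 3 - 1 \<and> even ((n - i) div 2)}
   \<union> (if even ((n - 2) div 2) then {{#2, n div 2 - 4, n div 2 + 2#}} else {})"

definition calPi :: "nat \<Rightarrow> (nat \<Rightarrow> nat) set" where
  "calPi n = {p \<in> carrier (sym_group n). cycle_type n p \<in> Pi_types n}"

end

theory Submission
  imports Defs
begin

definition rot :: "nat \<Rightarrow> nat \<Rightarrow> nat \<Rightarrow> nat" where
  "rot a b x = (if a \<le> x \<and> x < b then (if Suc x = b then a else Suc x) else x)"

lemma rot_in: "x \<in> {a..<b} \<Longrightarrow> rot a b x \<in> {a..<b}"
  by (auto simp: rot_def)

lemma rot_permutes: "rot a b permutes {a..<b}"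
proof (rule inj_imp_permutes)
  show "inj_on (rot a b) {a..<b}"
    by (auto simp: inj_on_def rot_def split: if_splits)
qed (auto simp: rot_def)

lemma rot_funpow: "a \<le> x \<Longrightarrow> x < b \<Longrightarrow> (rot a b ^^ t) x = a + (x - a + t) mod (b - a)"
proof (induction t)
  case 0 then show ?case by simp
next
  case (Suc t)
  let ?r = "(x - a + t) mod (b - a)"
  have r: "?r < b - a" using Suc by simp
  have "(rot a b ^^ Suc t) x = rot a b (a + ?r)" using Suc by simp
  also have "\<dots> = a + (x - a + Suc t) mod (b - a)"
    using r by (auto simp: rot_def mod_Suc) linarith
  finally show ?case .
qed

lemma orbit_rot: assumes "a \<le> x" "x < b" shows "orbit (rot a b) x = {a..<b}"
proof
  show "orbit (rot a b) x \<subseteq> {a..<b}"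
  proof -
    have "(rot a b ^^ t) x \<in> {a..<b}" for t
      by (induction t) (use assms rot_in in auto)
    then show ?thesis by (auto simp: orbit_altdef)
  qed
next
  show "{a..<b} \<subseteq> orbit (rot a b) x"
  proof
    fix y assume y: "y \<in> {a..<b}"
    define t where "t = (b - a) + (y - a) - (x - a)"
    have t0: "0 < t" using assms y by (simp add: t_def)
    have "x - a + t = (b - a) + (y - a)" using assms y by (simp add: t_def)
    moreover have "((b - a) + (y - a)) mod (b - a) = y - a" using y
      by (metis atLeastLessThan_iff diff_less_mono mod_add_self1 mod_less)
    ultimately have "(rot a b ^^ t) x = y" using assms y by (simp add: rot_funpow)
    with t0 show "y \<in> orbit (rot a b) x" by (auto simp: orbit_altdef)
  qed
qed

lemma orbit_rot_cong:
  assumes "\<And>y. y \<in> {a..<b} \<Longrightarrow> p y = rot a b y" "x \<in> {a..<b}"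
  shows "orbit p x = {a..<b}"
proof -
  have "orbit p x = orbit (rot a b) x"
    by (rule orbit_cong0[OF assms(2)]) (use assms rot_in in auto)
  then show ?thesis using assms(2) orbit_rot by auto
qed

lemma rot_id: "rot a (Suc a) = id"
  by (auto simp: rot_def fun_eq_iff)

lemma rot_step: "a < b \<Longrightarrow> rot a (Suc b) = transpose a b \<circ> rot a b"
  by (auto simp: rot_def fun_eq_iff transpose_def)

lemma rot_permutation: "permutation (rot a b)"
  using rot_permutes permutation_permutes by blast

lemma evenperm_rot: "a < b \<Longrightarrow> evenperm (rot a b) \<longleftrightarrow> even (b - a - 1)"
proof (induction b)
  case 0 then show ?case by simp
next
  case (Suc b)
  show ?case
  proof (cases "a = b")
    case True then show ?thesis by (simp add: rot_id)
  next
    case False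
    then have ab: "a < b" using Suc by simp
    have "evenperm (rot a (Suc b)) \<longleftrightarrow> evenperm (transpose a b) = evenperm (rot a b)"
      by (simp add: rot_step[OF ab] evenperm_comp permutation_swap_id rot_permutation)
    also have "\<dots> \<longleftrightarrow> \<not> even (b - a - 1)" using ab Suc by (simp add: evenperm_swap)
    also have "\<dots> \<longleftrightarrow> even (Suc b - a - 1)" using ab by (simp add: Suc_diff_le)
    finally show ?thesis .
  qed
qed

lemma rot_sub_permutes: "1 \<le> a \<Longrightarrow> b \<le> Suc n \<Longrightarrow> rot a b permutes {1..n}"
  by (rule permutes_subset[OF rot_permutes]) auto

lemma cycle_type_3:
  assumes "(\<lambda>x. orbit p x) ` {1..n} = {I1, I2, I3}" "I1 \<noteq> I2" "I1 \<noteq> I3" "I2 \<noteq> I3"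
  shows "cycle_type n p = {#card I1, card I2, card I3#}"
  using assms by (simp add: cycle_type_def)

lemma cycle_type_2:
  assumes "(\<lambda>x. orbit p x) ` {1..n} = {I1, I2}" "I1 \<noteq> I2"
  shows "cycle_type n p = {#card I1, card I2#}"
  using assms by (simp add: cycle_type_def)

lemma cycle_type_1:
  assumes "(\<lambda>x. orbit p x) ` {1..n} = {I1}"
  shows "cycle_type n p = {#card I1#}"
  using assms by (simp add: cycle_type_def)

definition c3 :: "nat \<Rightarrow> nat \<Rightarrow> nat \<Rightarrow> nat \<Rightarrow> nat" where
  "c3 n a b = rot 1 (Suc a) \<circ> rot (Suc a) (Suc b) \<circ> rot (Suc b) (Suc n)"

definition c2 :: "nat \<Rightarrow> nat \<Rightarrow> nat \<Rightarrow> nat" where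
  "c2 n a = rot 1 (Suc a) \<circ> rot (Suc a) (Suc n)"

definition c1 :: "nat \<Rightarrow> nat \<Rightarrow> nat" where
  "c1 n = rot 1 (Suc n)"

lemma c3_permutes: "1 \<le> a \<Longrightarrow> a < b \<Longrightarrow> b < n \<Longrightarrow> c3 n a b permutes {1..n}"
  unfolding c3_def by (intro permutes_compose rot_sub_permutes) auto

lemma c2_permutes: "1 \<le> a \<Longrightarrow> a < n \<Longrightarrow> c2 n a permutes {1..n}"
  unfolding c2_def by (intro permutes_compose rot_sub_permutes) auto

lemma c1_permutes: "c1 n permutes {1..n}"
  unfolding c1_def by (intro rot_sub_permutes) auto

lemma rot_out: "x < a \<or> b \<le> x \<Longrightarrow> rot a b x = x"
  by (auto simp: rot_def)

lemma c3_orbits: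
  assumes "1 \<le> a" "a < b" "b < n"
  shows "x \<in> {1..<Suc a} \<Longrightarrow> orbit (c3 n a b) x = {1..<Suc a}"
    and "x \<in> {Suc a..<Suc b} \<Longrightarrow> orbit (c3 n a b) x = {Suc a..<Suc b}"
    and "x \<in> {Suc b..<Suc n} \<Longrightarrow> orbit (c3 n a b) x = {Suc b..<Suc n}"
proof -
  show "x \<in> {1..<Suc a} \<Longrightarrow> orbit (c3 n a b) x = {1..<Suc a}"
    by (rule orbit_rot_cong) (use assms in \<open>auto simp: c3_def rot_out\<close>)
  show "x \<in> {Suc a..<Suc b} \<Longrightarrow> orbit (c3 n a b) x = {Suc a..<Suc b}"
  proof (rule orbit_rot_cong)
    fix y assume y: "y \<in> {Suc a..<Suc b}"
    then have "rot (Suc a) (Suc b) y \<in> {Suc a..<Suc b}" by (rule rot_in)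
    with y show "c3 n a b y = rot (Suc a) (Suc b) y" by (auto simp: c3_def rot_out)
  qed
  show "x \<in> {Suc b..<Suc n} \<Longrightarrow> orbit (c3 n a b) x = {Suc b..<Suc n}"
  proof (rule orbit_rot_cong)
    fix y assume y: "y \<in> {Suc b..<Suc n}"
    then have "rot (Suc b) (Suc n) y \<in> {Suc b..<Suc n}" by (rule rot_in)
    with y assms show "c3 n a b y = rot (Suc b) (Suc n) y" by (auto simp: c3_def rot_out)
  qed
qed

lemma c3_reps:
  assumes "1 \<le> a" "a < b" "b < n" "x \<in> {1..n}"
  shows "\<exists>r\<in>{1, Suc a, Suc b}. orbit (c3 n a b) x = orbit (c3 n a b) r"
proof -
  have "x \<in> {1..<Suc a} \<or> x \<in> {Suc a..<Suc b} \<or> x \<in> {Suc b..<Suc n}" using assms by auto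
  then show ?thesis
  proof (elim disjE)
    assume "x \<in> {1..<Suc a}" then show ?thesis
      using c3_orbits(1)[OF assms(1-3), of x] c3_orbits(1)[OF assms(1-3), of 1] assms by auto
  next
    assume "x \<in> {Suc a..<Suc b}" then show ?thesis
      using c3_orbits(2)[OF assms(1-3), of x] c3_orbits(2)[OF assms(1-3), of "Suc a"] assms by auto
  next
    assume "x \<in> {Suc b..<Suc n}" then show ?thesis
      using c3_orbits(3)[OF assms(1-3), of x] c3_orbits(3)[OF assms(1-3), of "Suc b"] assms by auto
  qed
qed

lemma c3_type:
  assumes "1 \<le> a" "a < b" "b < n"
  shows "cycle_type n (c3 n a b) = {#a, b - a, n - b#}"
proof -
  have img: "(\<lambda>x. orbit (c3 n a b) x) ` {1..n} = {{1..<Suc a}, {Suc a..<Suc b}, {Suc b..<Suc n}}"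
  proof (intro equalityI subsetI)
    fix I assume "I \<in> (\<lambda>x. orbit (c3 n a b) x) ` {1..n}"
    then obtain x where x: "x \<in> {1..n}" "I = orbit (c3 n a b) x" by auto
    then have "x \<in> {1..<Suc a} \<or> x \<in> {Suc a..<Suc b} \<or> x \<in> {Suc b..<Suc n}" by auto
    then show "I \<in> {{1..<Suc a}, {Suc a..<Suc b}, {Suc b..<Suc n}}"
    proof (elim disjE)
      assume "x \<in> {1..<Suc a}" then show ?thesis using c3_orbits(1)[OF assms, of x] x(2) by simp
    next
      assume "x \<in> {Suc a..<Suc b}" then show ?thesis using c3_orbits(2)[OF assms, of x] x(2) by simp
    next
      assume "x \<in> {Suc b..<Suc n}" then show ?thesis using c3_orbits(3)[OF assms, of x] x(2) by simp
    qed
  next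
    fix I assume "I \<in> {{1..<Suc a}, {Suc a..<Suc b}, {Suc b..<Suc n}}"
    then show "I \<in> (\<lambda>x. orbit (c3 n a b) x) ` {1..n}"
    proof (elim insertE)
      assume "I = {1..<Suc a}" then show ?thesis
        using c3_orbits(1)[OF assms, of 1] assms by (intro image_eqI[of _ _ 1]) auto
    next
      assume "I = {Suc a..<Suc b}" then show ?thesis
        using c3_orbits(2)[OF assms, of "Suc a"] assms by (intro image_eqI[of _ _ "Suc a"]) auto
    next
      assume "I = {Suc b..<Suc n}" then show ?thesis
        using c3_orbits(3)[OF assms, of "Suc b"] assms by (intro image_eqI[of _ _ "Suc b"]) auto
    qed simp
  qed
  have "1 \<in> {1..<Suc a}" "1 \<notin> {Suc a..<Suc b}" "1 \<notin> {Suc b..<Suc n}"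
    "Suc a \<in> {Suc a..<Suc b}" "Suc a \<notin> {Suc b..<Suc n}" using assms by auto
  then have "{1..<Suc a} \<noteq> {Suc a..<Suc b}" "{1..<Suc a} \<noteq> {Suc b..<Suc n}"
       "{Suc a..<Suc b} \<noteq> {Suc b..<Suc n}" by blast+
  from cycle_type_3[OF img this] show ?thesis using assms by simp
qed

lemma c3_first: "1 \<le> a \<Longrightarrow> a < b \<Longrightarrow> y \<in> {1..<Suc a} \<Longrightarrow> c3 n a b y = rot 1 (Suc a) y"
  by (auto simp: c3_def rot_out)

lemma c3_image_first:
  assumes "1 \<le> a" "a < b" shows "c3 n a b ` {1..a} = {1..a}"
proof -
  have "c3 n a b ` {1..<Suc a} = rot 1 (Suc a) ` {1..<Suc a}"
    using c3_first[OF assms] by (intro image_cong) auto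
  also have "\<dots> = {1..<Suc a}" by (rule permutes_image[OF rot_permutes])
  finally show ?thesis by (simp add: atLeastLessThanSuc_atLeastAtMost)
qed

lemma c2_orbits:
  assumes "1 \<le> a" "a < n"
  shows "x \<in> {1..<Suc a} \<Longrightarrow> orbit (c2 n a) x = {1..<Suc a}"
    and "x \<in> {Suc a..<Suc n} \<Longrightarrow> orbit (c2 n a) x = {Suc a..<Suc n}"
proof -
  show "x \<in> {1..<Suc a} \<Longrightarrow> orbit (c2 n a) x = {1..<Suc a}"
    by (rule orbit_rot_cong) (use assms in \<open>auto simp: c2_def rot_out\<close>)
  show "x \<in> {Suc a..<Suc n} \<Longrightarrow> orbit (c2 n a) x = {Suc a..<Suc n}"
  proof (rule orbit_rot_cong)
    fix y assume y: "y \<in> {Suc a..<Suc n}"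
    then have "rot (Suc a) (Suc n) y \<in> {Suc a..<Suc n}" by (rule rot_in)
    with y show "c2 n a y = rot (Suc a) (Suc n) y" by (auto simp: c2_def rot_out)
  qed
qed

lemma c2_reps:
  assumes "1 \<le> a" "a < n" "x \<in> {1..n}"
  shows "\<exists>r\<in>{1, Suc a}. orbit (c2 n a) x = orbit (c2 n a) r"
proof -
  have "x \<in> {1..<Suc a} \<or> x \<in> {Suc a..<Suc n}" using assms by auto
  then show ?thesis
  proof (elim disjE)
    assume "x \<in> {1..<Suc a}" then show ?thesis
      using c2_orbits(1)[OF assms(1-2), of x] c2_orbits(1)[OF assms(1-2), of 1] assms by auto
  next
    assume "x \<in> {Suc a..<Suc n}" then show ?thesis
      using c2_orbits(2)[OF assms(1-2), of x] c2_orbits(2)[OF assms(1-2), of "Suc a"] assms by auto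
  qed
qed

lemma c2_type:
  assumes "1 \<le> a" "a < n"
  shows "cycle_type n (c2 n a) = {#a, n - a#}"
proof -
  have img: "(\<lambda>x. orbit (c2 n a) x) ` {1..n} = {{1..<Suc a}, {Suc a..<Suc n}}"
  proof (intro equalityI subsetI)
    fix I assume "I \<in> (\<lambda>x. orbit (c2 n a) x) ` {1..n}"
    then obtain x where x: "x \<in> {1..n}" "I = orbit (c2 n a) x" by auto
    then have "x \<in> {1..<Suc a} \<or> x \<in> {Suc a..<Suc n}" by auto
    then show "I \<in> {{1..<Suc a}, {Suc a..<Suc n}}"
    proof (elim disjE)
      assume "x \<in> {1..<Suc a}" then show ?thesis using c2_orbits(1)[OF assms, of x] x(2) by simp
    next
      assume "x \<in> {Suc a..<Suc n}" then show ?thesis using c2_orbits(2)[OF assms, of x] x(2) by simp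
    qed
  next
    fix I assume "I \<in> {{1..<Suc a}, {Suc a..<Suc n}}"
    then show "I \<in> (\<lambda>x. orbit (c2 n a) x) ` {1..n}"
    proof (elim insertE)
      assume "I = {1..<Suc a}" then show ?thesis
        using c2_orbits(1)[OF assms, of 1] assms by (intro image_eqI[of _ _ 1]) auto
    next
      assume "I = {Suc a..<Suc n}" then show ?thesis
        using c2_orbits(2)[OF assms, of "Suc a"] assms by (intro image_eqI[of _ _ "Suc a"]) auto
    qed simp
  qed
  have "1 \<in> {1..<Suc a}" "1 \<notin> {Suc a..<Suc n}" using assms by auto
  then have "{1..<Suc a} \<noteq> {Suc a..<Suc n}" by blast
  from cycle_type_2[OF img this] show ?thesis using assms by simp
qed

lemma c1_orbit: "x \<in> {1..n} \<Longrightarrow> orbit (c1 n) x = {1..n}"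
  using orbit_rot_cong[of 1 "Suc n" "c1 n" x] by (auto simp: c1_def atLeastLessThanSuc_atLeastAtMost)

lemma c1_type: assumes "1 \<le> n" shows "cycle_type n (c1 n) = {#n#}"
proof -
  have "(\<lambda>x. orbit (c1 n) x) ` {1..n} = {{1..n}}"
    using c1_orbit assms by auto
  from cycle_type_1[OF this] show ?thesis by simp
qed

definition Odd :: "nat \<Rightarrow> nat set" where "Odd m = (\<lambda>j. 2*j+1) ` {..<m}"
definition Even :: "nat \<Rightarrow> nat set" where "Even m = (\<lambda>j. 2*j+2) ` {..<m}"

lemma card_Odd: "card (Odd m) = m"
  unfolding Odd_def by (subst card_image) (auto simp: inj_on_def)

lemma Odd_Even_Un: "Odd m \<union> Even m = {1..2*m}"
proof (intro equalityI subsetI)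
  fix x assume "x \<in> {1..2*m}"
  then show "x \<in> Odd m \<union> Even m"
  proof (cases "odd x")
    case True
    then obtain j where "x = 2*j+1" by (metis oddE)
    with \<open>x \<in> {1..2*m}\<close> show ?thesis by (auto simp: Odd_def)
  next
    case False
    then obtain j where "x = 2*j" by (metis evenE)
    with \<open>x \<in> {1..2*m}\<close> have "x = 2*(j-1)+2" "j - 1 < m" by auto
    then show ?thesis by (auto simp: Even_def)
  qed
qed (auto simp: Odd_def Even_def)

lemma Odd_Even_disj: "Odd m \<inter> Even m = {}"
  by (auto simp: Odd_def Even_def) presburger

lemma c1_Odd: "c1 (2*m) ` Odd m = Even m"
proof (intro equalityI subsetI)
  fix y assume "y \<in> c1 (2*m) ` Odd m"
  then obtain j where "j < m" "y = c1 (2*m) (2*j+1)" by (auto simp: Odd_def)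
  then show "y \<in> Even m" by (auto simp: Even_def c1_def rot_def)
next
  fix y assume "y \<in> Even m"
  then obtain j where "j < m" "y = 2*j+2" by (auto simp: Even_def)
  then have "y = c1 (2*m) (2*j+1)" "2*j+1 \<in> Odd m" by (auto simp: Odd_def c1_def rot_def)
  then show "y \<in> c1 (2*m) ` Odd m" by blast
qed

lemma c1_Even: "c1 (2*m) ` Even m = Odd m"
proof (intro equalityI subsetI)
  fix y assume "y \<in> c1 (2*m) ` Even m"
  then obtain j where j: "j < m" "y = c1 (2*m) (2*j+2)" by (auto simp: Even_def)
  show "y \<in> Odd m"
  proof (cases "Suc j = m")
    case True then have "y = 1" using j by (auto simp: c1_def rot_def)
    then show ?thesis using j by (auto simp: Odd_def intro!: image_eqI[of _ _ 0])
  next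
    case False then have "y = 2*(Suc j)+1" "Suc j < m" using j by (auto simp: c1_def rot_def)
    then show ?thesis unfolding Odd_def by (intro image_eqI[of _ _ "Suc j"]) auto
  qed
next
  fix y assume "y \<in> Odd m"
  then obtain j where j: "j < m" "y = 2*j+1" by (auto simp: Odd_def)
  show "y \<in> c1 (2*m) ` Even m"
  proof (cases j)
    case 0
    then have "y = c1 (2*m) (2*(m-1)+2)" "2*(m-1)+2 \<in> Even m" using j by (auto simp: c1_def rot_def Even_def)
    then show ?thesis by blast
  next
    case (Suc i)
    then have "y = c1 (2*m) (2*i+2)" "2*i+2 \<in> Even m" using j by (auto simp: c1_def rot_def Even_def)
    then show ?thesis by blast
  qed
qed

definition conj :: "(nat \<Rightarrow> nat) \<Rightarrow> (nat \<Rightarrow> nat) \<Rightarrow> nat \<Rightarrow> nat" where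
  "conj q p = q \<circ> p \<circ> inv' q"

lemma conj_funpow:
  assumes "q permutes S" shows "(conj q p ^^ t) (q x) = q ((p ^^ t) x)"
proof (induction t)
  case 0 then show ?case by simp
next
  case (Suc t) then show ?case
    by (simp add: conj_def permutes_inverses[OF assms])
qed

lemma orbit_conj:
  assumes "q permutes S" shows "orbit (conj q p) (q x) = q ` orbit p x"
  unfolding orbit_altdef conj_funpow[OF assms] by auto

lemma conj_permutes: "p permutes S \<Longrightarrow> q permutes S \<Longrightarrow> conj q p permutes S"
  unfolding conj_def by (intro permutes_compose permutes_inv) auto

lemma conj_image: "q permutes S \<Longrightarrow> conj q p ` (q ` A) = q ` (p ` A)"
  by (auto simp: conj_def image_comp permutes_inverses)

lemma evenperm_conj:
  assumes "p permutes {1..n}" "q permutes {1..n}" shows "evenperm (conj q p) = evenperm p"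
proof -
  have pp: "permutation p" "permutation q" "permutation (inv' q)"
    using assms permutation_permutes permutes_inv by blast+
  have "evenperm (conj q p) = (evenperm q = (evenperm p = evenperm (inv' q)))"
    unfolding conj_def using pp by (simp add: evenperm_comp permutation_compose) blast
  also have "\<dots> = evenperm p" using pp by (simp add: evenperm_inv) blast
  finally show ?thesis .
qed

lemma cycle_type_conj:
  assumes q: "q permutes {1..n}" shows "cycle_type n (conj q p) = cycle_type n p"
proof -
  have "(\<lambda>y. orbit (conj q p) y) ` {1..n} = (\<lambda>y. orbit (conj q p) y) ` (q ` {1..n})"
    using permutes_image[OF q] by simp
  also have "\<dots> = (\<lambda>x. q ` orbit p x) ` {1..n}"
    using orbit_conj[OF q] by (auto simp: image_comp)
  also have "\<dots> = image q ` ((\<lambda>x. orbit p x) ` {1..n})" by (simp add: image_comp)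
  finally have eq: "(\<lambda>y. orbit (conj q p) y) ` {1..n} = image q ` ((\<lambda>x. orbit p x) ` {1..n})" .
  have injq: "inj q" using permutes_inj[OF q] .
  have inj: "inj_on (image q) X" for X
    using injq by (simp add: inj_on_def inj_image_eq_iff)
  have "cycle_type n (conj q p) = image_mset card (image_mset (image q) (mset_set ((\<lambda>x. orbit p x) ` {1..n})))"
    unfolding cycle_type_def eq by (simp add: image_mset_mset_set[OF inj])
  also have "\<dots> = image_mset card (mset_set ((\<lambda>x. orbit p x) ` {1..n}))"
    by (simp add: multiset.map_comp o_def card_image[OF inj_on_subset[OF injq]])
  finally show ?thesis by (simp add: cycle_type_def)
qed

lemma count_conj:
  fixes c :: "nat \<Rightarrow> nat"
  assumes c: "c permutes {1..n}" and R: "finite R" "R \<subseteq> {1..n}"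
    and cover: "\<And>x. x \<in> {1..n} \<Longrightarrow> \<exists>r\<in>R. x \<in> orbit c r"
    and G: "\<And>q. q \<in> G \<Longrightarrow> q permutes {1..n}"
    and T: "\<And>q. q \<in> G \<Longrightarrow> conj q c \<in> T" "finite T"
  shows "card G \<le> card T * n ^ card R"
proof -
  define \<Phi> where "\<Phi> q = (conj q c, restrict q R)" for q
  have "inj_on \<Phi> G"
  proof (rule inj_onI)
    fix q q' assume q: "q \<in> G" and q': "q' \<in> G" and eq: "\<Phi> q = \<Phi> q'"
    then have y: "conj q c = conj q' c" and r: "\<And>r. r \<in> R \<Longrightarrow> q r = q' r"
      by (auto simp: \<Phi>_def restrict_def fun_eq_iff split: if_splits)
    show "q = q'"
    proof
      fix x show "q x = q' x"
      proof (cases "x \<in> {1..n}")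
        case False then show ?thesis using G[OF q] G[OF q'] by (simp add: permutes_not_in)
      next
        case True
        then obtain r where rR: "r \<in> R" and xo: "x \<in> orbit c r" using cover by blast
        then obtain t where xt: "x = (c ^^ t) r" by (auto simp: orbit_altdef)
        have "q x = (conj q c ^^ t) (q r)" using conj_funpow[OF G[OF q]] xt by simp
        also have "\<dots> = (conj q' c ^^ t) (q' r)" using y r[OF rR] by simp
        also have "\<dots> = q' x" using conj_funpow[OF G[OF q']] xt by simp
        finally show ?thesis .
      qed
    qed
  qed
  moreover have "\<Phi> ` G \<subseteq> T \<times> (R \<rightarrow>\<^sub>E {1..n})"
  proof
    fix z assume "z \<in> \<Phi> ` G"
    then obtain q where q: "q \<in> G" "z = \<Phi> q" by auto
    have "q r \<in> {1..n}" if "r \<in> R" for r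
      using that R(2) permutes_in_image[OF G[OF q(1)]] by blast
    then show "z \<in> T \<times> (R \<rightarrow>\<^sub>E {1..n})" using q T by (auto simp: \<Phi>_def)
  qed
  ultimately have "card G \<le> card (T \<times> (R \<rightarrow>\<^sub>E {1..n}))"
    using T(2) R(1) by (metis card_image card_mono finite_PiE finite_SigmaI finite_atLeastAtMost)
  also have "\<dots> = card T * n ^ card R" using R(1) by (simp add: card_cartesian_product card_funcsetE)
  finally show ?thesis .
qed

lemma exists_perm_map:
  fixes n :: nat and A B :: "nat set"
  assumes "A \<subseteq> {1..n}" "B \<subseteq> {1..n}" "card A = card B"
  shows "\<exists>\<sigma>. \<sigma> permutes {1..n} \<and> \<sigma> ` A = B"
proof -
  have fA1: "finite A" using finite_subset[OF assms(1)] by simp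
  have fA2: "finite B" using finite_subset[OF assms(2)] by simp
  note fA = fA1 fA2
  obtain h where h: "bij_betw h A B" using finite_same_card_bij[OF fA assms(3)] by blast
  have c: "card ({1..n} - A) = card ({1..n} - B)"
    using assms fA by (simp add: card_Diff_subset)
  have f2: "finite ({1..n} - A)" "finite ({1..n} - B)" by auto
  obtain g where g: "bij_betw g ({1..n} - A) ({1..n} - B)"
    using finite_same_card_bij[OF f2 c] by blast
  define \<sigma> where "\<sigma> x = (if x \<in> A then h x else if x \<in> {1..n} - A then g x else x)" for x
  have "bij_betw \<sigma> A B = bij_betw h A B" by (rule bij_betw_cong) (simp add: \<sigma>_def)
  with h have b1: "bij_betw \<sigma> A B" by simp
  have "bij_betw \<sigma> ({1..n} - A) ({1..n} - B) = bij_betw g ({1..n} - A) ({1..n} - B)"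
    by (rule bij_betw_cong) (simp add: \<sigma>_def)
  with g have b2: "bij_betw \<sigma> ({1..n} - A) ({1..n} - B)" by simp
  have "bij_betw \<sigma> (A \<union> ({1..n} - A)) (B \<union> ({1..n} - B))"
    by (rule bij_betw_combine[OF b1 b2]) blast
  moreover have "A \<union> ({1..n} - A) = {1..n}" "B \<union> ({1..n} - B) = {1..n}" using assms by auto
  ultimately have "bij_betw \<sigma> {1..n} {1..n}" by simp
  moreover have "\<sigma> x = x" if "x \<notin> {1..n}" for x
    using that assms(1) by (auto simp: \<sigma>_def)
  ultimately have "\<sigma> permutes {1..n}" by (rule bij_imp_permutes)
  moreover have "\<sigma> ` A = B" using b1 by (simp add: bij_betw_def)
  ultimately show ?thesis by blast
qed

definition prodperms :: "nat set \<Rightarrow> nat set \<Rightarrow> (nat \<Rightarrow> nat) set" where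
  "prodperms A B = (\<lambda>(r1, r2). r1 \<circ> r2) ` ({r1. r1 permutes A} \<times> {r2. r2 permutes B})"

lemma card_prodperms:
  assumes "A \<inter> B = {}" "finite A" "finite B"
  shows "card (prodperms A B) = fact (card A) * fact (card B)"
proof -
  have "inj_on (\<lambda>(r1, r2). r1 \<circ> r2) ({r1. r1 permutes A} \<times> {r2. r2 permutes B})"
  proof (rule inj_onI, clarify)
    fix r1 r2 r1' r2' :: "nat \<Rightarrow> nat"
    assume p: "r1 permutes A" "r2 permutes B" "r1' permutes A" "r2' permutes B"
      and eq: "r1 \<circ> r2 = r1' \<circ> r2'"
    have "r1 x = r1' x" for x
    proof (cases "x \<in> A")
      case True then have "x \<notin> B" using assms by auto
      then have "r2 x = x" "r2' x = x" using p by (auto simp: permutes_not_in)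
      then show ?thesis using fun_cong[OF eq, of x] by simp
    next
      case False then show ?thesis using p by (simp add: permutes_not_in)
    qed
    then have r1: "r1 = r1'" by auto
    have "r2 = r2'"
    proof
      fix x show "r2 x = r2' x"
        using fun_cong[OF eq, of x] r1 permutes_inj[OF p(1)] by (auto dest: injD)
    qed
    with r1 show "r1 = r1' \<and> r2 = r2'" by simp
  qed
  then have "card (prodperms A B) = card ({r1. r1 permutes A} \<times> {r2. r2 permutes B})"
    unfolding prodperms_def by (rule card_image)
  also have "\<dots> = fact (card A) * fact (card B)"
    using assms by (simp add: card_cartesian_product card_permutations)
  finally show ?thesis .
qed

lemma prodperms_mem:
  assumes "q \<in> prodperms A B" "A \<inter> B = {}"
  shows "q permutes (A \<union> B)" "q ` A = A" "q ` B = B"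
proof -
  obtain r1 r2 where r: "r1 permutes A" "r2 permutes B" "q = r1 \<circ> r2"
    using assms(1) by (auto simp: prodperms_def)
  show "q permutes (A \<union> B)" unfolding r(3)
    by (intro permutes_compose; rule permutes_subset) (use r in auto)
  have fxr2: "r2 x = x" if "x \<in> A" for x
    using r(2) assms(2) that by (intro permutes_not_in) auto
  have "r2 ` A = (\<lambda>x. x) ` A" by (rule image_cong) (simp_all add: fxr2)
  then have "r2 ` A = A" by simp
  moreover have "q ` A = r1 ` (r2 ` A)" using r(3) by (simp add: image_comp)
  ultimately show "q ` A = A" using permutes_image[OF r(1)] by simp
  have fxr1: "r1 x = x" if "x \<in> B" for x
    using r(1) assms(2) that by (intro permutes_not_in) auto
  have "r1 ` B = (\<lambda>x. x) ` B" by (rule image_cong) (simp_all add: fxr1)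
  then have "r1 ` B = B" by simp
  moreover have "q ` B = r1 ` (r2 ` B)" using r(3) by (simp add: image_comp)
  ultimately show "q ` B = B" using permutes_image[OF r(2)] by simp
qed

lemma card_kernel:
  fixes P :: "nat set set" and n k :: nat
  assumes P: "partition_on {1..n} P" "\<forall>B\<in>P. card B = k"
  shows "card {q. q permutes {1..n} \<and> (\<forall>B\<in>P. q ` B = B)} \<le> fact k ^ card P"
proof -
  let ?K = "{q. q permutes {1..n} \<and> (\<forall>B\<in>P. q ` B = B)}"
  have "\<Union>P = {1..n}" using P(1) by (simp add: partition_on_def)
  then have fP: "finite P" by (metis finite_UnionD finite_atLeastAtMost)
  have Bsub: "B \<subseteq> {1..n}" if "B \<in> P" for B using P(1) that by (auto simp: partition_on_def)
  have cover: "\<exists>B\<in>P. x \<in> B" if "x \<in> {1..n}" for x using P(1) that by (auto simp: partition_on_def)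
  define \<psi> where "\<psi> q = (\<lambda>B\<in>P. \<lambda>x. if x \<in> B then q x else x)" for q :: "nat \<Rightarrow> nat"
  have inj: "inj_on \<psi> ?K"
  proof (rule inj_onI)
    fix q q' assume q: "q \<in> ?K" and q': "q' \<in> ?K" and eq: "\<psi> q = \<psi> q'"
    show "q = q'"
    proof
      fix x show "q x = q' x"
      proof (cases "x \<in> {1..n}")
        case False
        have "q permutes {1..n}" "q' permutes {1..n}" using q q' by auto
        then show ?thesis using False by (simp add: permutes_not_in)
      next
        case True
        then obtain B where B: "B \<in> P" "x \<in> B" using cover by blast
        have "\<psi> q B x = \<psi> q' B x" using eq by simp
        then show ?thesis using B by (simp add: \<psi>_def)
      qed
    qed
  qed
  have sub: "\<psi> ` ?K \<subseteq> (\<Pi>\<^sub>E B\<in>P. {g. g permutes B})"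
  proof
    fix z assume "z \<in> \<psi> ` ?K"
    then obtain q where q: "q permutes {1..n}" "\<forall>B\<in>P. q ` B = B" "z = \<psi> q" by auto
    have "(\<lambda>x. if x \<in> B then q x else x) permutes B" if B: "B \<in> P" for B
    proof (rule inj_imp_permutes)
      show "inj_on (\<lambda>x. if x \<in> B then q x else x) B"
        using permutes_inj[OF q(1)] by (simp add: inj_on_def inj_def)
      show "finite B" using Bsub[OF B] by (rule finite_subset) simp
      show "(if x \<in> B then q x else x) \<in> B" if "x \<in> B" for x using q(2) B that by auto
    qed simp
    then show "z \<in> (\<Pi>\<^sub>E B\<in>P. {g. g permutes B})" using q(3) by (auto simp: \<psi>_def)
  qed
  have fB: "finite B" if "B \<in> P" for B using Bsub[OF that] by (rule finite_subset) simp
  have fin: "finite (\<Pi>\<^sub>E B\<in>P. {g. g permutes B})"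
    using fP fB by (intro finite_PiE) (auto intro: finite_permutations)
  have "card ?K = card (\<psi> ` ?K)" using inj by (rule card_image[symmetric])
  also have "\<dots> \<le> card (\<Pi>\<^sub>E B\<in>P. {g. g permutes B})" by (rule card_mono[OF fin sub])
  also have "\<dots> = (\<Prod>B\<in>P. fact (card B))"
    using fP fB by (simp add: card_PiE card_permutations)
  also have "\<dots> = fact k ^ card P" using P(2) by simp
  finally show ?thesis .
qed

lemma card_part_stab:
  fixes P :: "nat set set" and n k :: nat
  assumes P: "partition_on {1..n} P" "\<forall>B\<in>P. card B = k"
  shows "card (partition_stabilizer n P) \<le> fact (card P) * fact k ^ card P"
proof -
  let ?M = "partition_stabilizer n P"
  let ?K = "{q. q permutes {1..n} \<and> (\<forall>B\<in>P. q ` B = B)}"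
  have "\<Union>P = {1..n}" using P(1) by (simp add: partition_on_def)
  then have fP: "finite P" by (metis finite_UnionD finite_atLeastAtMost)
  have Bsub: "B \<subseteq> {1..n}" if "B \<in> P" for B using P(1) that by (auto simp: partition_on_def)
  have Mp: "p permutes {1..n}" "\<And>B. B \<in> P \<Longrightarrow> p ` B \<in> P" if "p \<in> ?M" for p
    using that by (auto simp: partition_stabilizer_def sym_group_carrier)
  define \<sigma> where "\<sigma> p = (\<lambda>B. if B \<in> P then p ` B else B)" for p :: "nat \<Rightarrow> nat"
  have \<sigma>perm: "\<sigma> p permutes P" if p: "p \<in> ?M" for p
  proof (rule inj_imp_permutes)
    show "inj_on (\<sigma> p) P"
      using permutes_inj[OF Mp(1)[OF p]] by (auto simp: inj_on_def \<sigma>_def inj_image_eq_iff)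
  qed (use fP Mp(2)[OF p] in \<open>auto simp: \<sigma>_def\<close>)
  define F where "F s = {p \<in> ?M. \<sigma> p = s}" for s
  have MU: "?M = (\<Union>s\<in>\<sigma> ` ?M. F s)" by (auto simp: F_def)
  have fS: "finite (\<sigma> ` ?M)"
  proof (rule finite_subset)
    show "\<sigma> ` ?M \<subseteq> {s. s permutes P}" using \<sigma>perm by auto
  qed (rule finite_permutations[OF fP])
  have cS: "card (\<sigma> ` ?M) \<le> fact (card P)"
  proof -
    have "card (\<sigma> ` ?M) \<le> card {s. s permutes P}"
      by (rule card_mono[OF finite_permutations[OF fP]]) (use \<sigma>perm in auto)
    then show ?thesis by (simp add: card_permutations[OF refl fP])
  qed
  have fK: "finite ?K" by (rule finite_subset[OF _ finite_permutations[of "{1..n}"]]) auto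
  have cF: "card (F s) \<le> card ?K" if s: "s \<in> \<sigma> ` ?M" for s
  proof -
    obtain p0 where p0: "p0 \<in> ?M" "\<sigma> p0 = s" using s by auto
    have p0p: "p0 permutes {1..n}" using Mp(1)[OF p0(1)] .
    have inj: "inj_on (\<lambda>p. inv' p0 \<circ> p) (F s)"
    proof (rule inj_onI)
      fix p p' assume "inv' p0 \<circ> p = inv' p0 \<circ> p'"
      then have "p0 \<circ> (inv' p0 \<circ> p) = p0 \<circ> (inv' p0 \<circ> p')" by simp
      moreover have e: "\<And>r. p0 \<circ> (inv' p0 \<circ> r) = r"
        by (simp add: o_assoc permutes_inv_o[OF p0p])
      ultimately show "p = p'" by metis
    qed
    have sub: "(\<lambda>p. inv' p0 \<circ> p) ` (F s) \<subseteq> ?K"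
    proof
      fix z assume "z \<in> (\<lambda>p. inv' p0 \<circ> p) ` (F s)"
      then obtain p where p: "p \<in> ?M" "\<sigma> p = s" "z = inv' p0 \<circ> p" by (auto simp: F_def)
      have "z permutes {1..n}" unfolding p(3)
        by (intro permutes_compose permutes_inv p0p Mp(1)[OF p(1)])
      moreover have "z ` B = B" if B: "B \<in> P" for B
      proof -
        have "p ` B = p0 ` B" using fun_cong[OF p(2), of B] fun_cong[OF p0(2), of B] B
          by (simp add: \<sigma>_def)
        moreover have "z ` B = inv' p0 ` (p ` B)" by (simp add: p(3) image_comp)
        ultimately have "z ` B = inv' p0 ` (p0 ` B)" by simp
        also have "\<dots> = B" by (simp add: image_comp permutes_inv_o[OF p0p])
        finally show ?thesis .
      qed
      ultimately show "z \<in> ?K" by blast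
    qed
    have "card (F s) = card ((\<lambda>p. inv' p0 \<circ> p) ` (F s))" using inj by (rule card_image[symmetric])
    also have "\<dots> \<le> card ?K" by (rule card_mono[OF fK sub])
    finally show ?thesis .
  qed
  have "card ?M \<le> (\<Sum>s\<in>\<sigma> ` ?M. card (F s))"
    by (subst MU) (rule card_UN_le[OF fS])
  also have "\<dots> \<le> (\<Sum>s\<in>\<sigma> ` ?M. card ?K)" by (rule sum_mono) (rule cF)
  also have "\<dots> = card (\<sigma> ` ?M) * card ?K" by simp
  also have "\<dots> \<le> fact (card P) * fact k ^ card P"
    by (rule mult_le_mono[OF cS card_kernel[OF P]])
  finally show ?thesis .
qed

lemma pc1:
  fixes n :: nat assumes n: "36 \<le> n" "even n"
  shows "{#1, n div 2 - 2, n - 1 - (n div 2 - 2)#} = {#1, n div 2 - 2, n div 2 + 1#}"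
proof -
  obtain m where "n = 2*m" using n by blast
  then have "n - 1 - (n div 2 - 2) = n div 2 + 1" using n by simp
  then show ?thesis by simp
qed

lemma pc2:
  fixes n i :: nat assumes n: "even n" "odd i" "i < n"
  shows "n - i - (n - i - 1) div 2 = (n - i + 1) div 2"
proof -
  have "odd (n - i)" using n by simp
  then obtain d where d: "n - i = 2*d + 1" by (metis oddE)
  then show ?thesis by simp
qed

lemma pc3:
  fixes n i :: nat assumes n: "even n" "even i" "i < n"
  shows "n - i - (n - i) div 2 = (n - i) div 2"
proof -
  have "even (n - i)" using n by simp
  then obtain d where d: "n - i = 2*d" by (metis evenE)
  then show ?thesis by simp
qed

lemma pc4:
  fixes n i :: nat assumes n: "even n" "even i" "i + 4 < n"
  shows "n - i - ((n - i) div 2 - 1) = (n - i) div 2 + 1"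
proof -
  have "even (n - i)" using n by simp
  then obtain d where d: "n - i = 2*d" by (metis evenE)
  then have "d \<ge> 1" using n by simp
  with d show ?thesis by simp
qed

lemma pc5:
  fixes n :: nat assumes n: "36 \<le> n" "even n"
  shows "n - 2 - (n div 2 - 4) = n div 2 + 2"
proof -
  obtain m where "n = 2*m" using n by blast
  then show ?thesis using n by simp
qed

lemma pi_choice:
  fixes n i :: nat
  assumes n: "36 \<le> n" "n mod 6 = 0" and i: "1 \<le> i" "i \<le> n div 3 - 1"
  shows "\<exists>a. 1 \<le> a \<and> i + a < n \<and> {#i, a, n - i - a#} \<in> Pi_types n"
proof -
  have ev: "even n" using n by presburger
  have ilt: "i + 20 < n" using i n by linarith
  consider "i = 1" | "odd i" "i \<noteq> 1" | "even i" "odd ((n - i) div 2)"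
    | "even i" "i \<noteq> 2" "even ((n - i) div 2)" | "i = 2" "even ((n - 2) div 2)"
    by blast
  then show ?thesis
  proof cases
    case 1
    have "{#i, n div 2 - 2, n - i - (n div 2 - 2)#} \<in> Pi_types n"
      using pc1[OF n(1) ev] 1 by (simp add: Pi_types_def)
    moreover have "1 \<le> n div 2 - 2" "i + (n div 2 - 2) < n" using 1 n by auto
    ultimately show ?thesis by blast
  next
    case 2
    then have i3: "3 \<le> i" using i by presburger
    have "{#i, (n - i - 1) div 2, (n - i + 1) div 2#} \<in> Pi_types n"
      using 2 i3 i unfolding Pi_types_def by blast
    then have "{#i, (n - i - 1) div 2, n - i - (n - i - 1) div 2#} \<in> Pi_types n"
      using pc2[of n i] 2 ev ilt by simp
    moreover have "1 \<le> (n - i - 1) div 2" "i + (n - i - 1) div 2 < n" using ilt by auto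
    ultimately show ?thesis by blast
  next
    case 3
    then have i2: "2 \<le> i" using i by presburger
    have "{#i, (n - i) div 2, (n - i) div 2#} \<in> Pi_types n"
      using 3 i2 i unfolding Pi_types_def by blast
    then have "{#i, (n - i) div 2, n - i - (n - i) div 2#} \<in> Pi_types n"
      using pc3[of n i] 3 ev ilt by simp
    moreover have "1 \<le> (n - i) div 2" "i + (n - i) div 2 < n" using ilt by auto
    ultimately show ?thesis by blast
  next
    case 4
    then have i4: "4 \<le> i" using i by presburger
    have "{#i, (n - i) div 2 - 1, (n - i) div 2 + 1#} \<in> Pi_types n"
      using 4 i4 i unfolding Pi_types_def by blast
    then have "{#i, (n - i) div 2 - 1, n - i - ((n - i) div 2 - 1)#} \<in> Pi_types n"
      using pc4[of n i] 4 ev ilt by simp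
    moreover have "1 \<le> (n - i) div 2 - 1" "i + ((n - i) div 2 - 1) < n" using ilt by auto
    ultimately show ?thesis by blast
  next
    case 5
    have "{#2, n div 2 - 4, n div 2 + 2#} \<in> (if even ((n - 2) div 2) then {{#2, n div 2 - 4, n div 2 + 2#}} else {})"
      using 5 by simp
    then have "{#2, n div 2 - 4, n div 2 + 2#} \<in> Pi_types n"
      unfolding Pi_types_def by (rule UnI2)
    then have "{#i, n div 2 - 4, n - i - (n div 2 - 4)#} \<in> Pi_types n"
      using pc5[OF n(1) ev] 5 by simp
    moreover have "1 \<le> n div 2 - 4" "i + (n div 2 - 4) < n" using 5 n by auto
    ultimately show ?thesis by blast
  qed
qed

lemma perm_of_permutes: "p permutes {1..(n::nat)} \<Longrightarrow> permutation p"
  unfolding permutation_permutes by blast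

lemma self_orbit: "p permutes {1..(n::nat)} \<Longrightarrow> x \<in> orbit p x"
  by (rule permutation_self_in_orbit) (rule perm_of_permutes)

lemma finite_calPi: "finite (X \<inter> calPi n)"
proof (rule finite_subset)
  show "X \<inter> calPi n \<subseteq> {p. p permutes {1..n}}" by (auto simp: calPi_def sym_group_carrier)
qed (rule finite_permutations, simp)

lemma lb_alt:
  fixes n :: nat assumes n: "36 \<le> n" "even n"
  shows "fact n \<le> card (carrier (alt_group n) \<inter> calPi n) * n ^ 2"
proof -
  define a where "a = (if even (n div 2) then n div 2 - 1 else n div 2 - 2)"
  obtain m where m: "n = 2 * m" using n by blast
  have a1: "1 \<le> a" "a < n" using n m by (auto simp: a_def)
  have aodd: "odd a" "odd (n - a)" using n m unfolding a_def by (cases "even m"; simp; presburger)+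
  let ?c = "c2 n a"
  have cp: "?c permutes {1..n}" using c2_permutes[OF a1] .
  have "{#a, n - a#} = (if even (n div 2) then {#n div 2 - 1, n div 2 + 1#} else {#n div 2 - 2, n div 2 + 2#})"
    using m n by (cases "even m") (auto simp: a_def)
  moreover have "(if even (n div 2) then {#n div 2 - 1, n div 2 + 1#} else {#n div 2 - 2, n div 2 + 2#}) \<in> Pi_types n"
    unfolding Pi_types_def by blast
  ultimately have ctype: "cycle_type n ?c \<in> Pi_types n" using c2_type[OF a1] by simp
  have ceven: "evenperm ?c"
  proof -
    have "evenperm (rot 1 (Suc a))" using a1 aodd by (subst evenperm_rot) auto
    moreover have "evenperm (rot (Suc a) (Suc n))" using a1 aodd by (subst evenperm_rot) auto
    ultimately show ?thesis unfolding c2_def by (simp add: evenperm_comp rot_permutation)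
  qed
  have "card {q. q permutes {1..n}} \<le> card (carrier (alt_group n) \<inter> calPi n) * n ^ card {1, Suc a}"
  proof (rule count_conj[OF cp])
    fix x assume x: "x \<in> {1..n}"
    obtain r where r: "r \<in> {1, Suc a}" "orbit ?c x = orbit ?c r" using c2_reps[OF a1 x] by blast
    have "x \<in> orbit ?c x" using self_orbit[OF cp] .
    with r show "\<exists>r\<in>{1, Suc a}. x \<in> orbit ?c r" by auto
  next
    fix q assume "q \<in> {q. q permutes {1..n}}"
    then have q: "q permutes {1..n}" by simp
    have "conj q ?c permutes {1..n}" using conj_permutes[OF cp q] .
    moreover have "evenperm (conj q ?c)" using evenperm_conj[OF cp q] ceven by simp
    moreover have "cycle_type n (conj q ?c) \<in> Pi_types n" using cycle_type_conj[OF q] ctype by simp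
    ultimately show "conj q ?c \<in> carrier (alt_group n) \<inter> calPi n"
      by (simp add: alt_group_carrier calPi_def sym_group_carrier)
  qed (use a1 finite_calPi in auto)
  moreover have "card {1, Suc a} = 2" using a1 by simp
  ultimately show ?thesis by (simp add: card_permutations)
qed

lemma lb_set:
  fixes n :: nat and A :: "nat set"
  assumes n: "36 \<le> n" "n mod 6 = 0" and A: "A \<subseteq> {1..n}" "1 \<le> card A" "card A \<le> n div 3 - 1"
  shows "fact (card A) * fact (n - card A) \<le> card (set_stabilizer n A \<inter> calPi n) * n ^ 3"
proof -
  define i where "i = card A"
  obtain a where a: "1 \<le> a" "i + a < n" "{#i, a, n - i - a#} \<in> Pi_types n"
    using pi_choice[OF n A(2,3)[folded i_def]] by blast
  have i1: "1 \<le> i" using A(2) i_def by simp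
  have ia: "1 \<le> i" "i < i + a" "i + a < n" using a i1 by auto
  let ?c0 = "c3 n i (i + a)"
  have c0p: "?c0 permutes {1..n}" using c3_permutes[OF ia] .
  have c0t: "cycle_type n ?c0 \<in> Pi_types n" using c3_type[OF ia] a(3) by (simp add: diff_diff_add)
  have c0i: "?c0 ` {1..i} = {1..i}" using c3_image_first[OF ia(1,2)] .
  have "{1..i} \<subseteq> {1..n}" "card {1..i} = card A" using ia by (auto simp: i_def)
  then obtain \<sigma> where \<sigma>: "\<sigma> permutes {1..n}" "\<sigma> ` {1..i} = A"
    using exists_perm_map[OF _ A(1)] by blast
  define c where "c = conj \<sigma> ?c0"
  have cp: "c permutes {1..n}" unfolding c_def by (rule conj_permutes[OF c0p \<sigma>(1)])
  have ct: "cycle_type n c \<in> Pi_types n" unfolding c_def using cycle_type_conj[OF \<sigma>(1)] c0t by simp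
  have cA: "c ` A = A"
  proof -
    have "c ` A = c ` (\<sigma> ` {1..i})" using \<sigma>(2) by simp
    also have "\<dots> = \<sigma> ` (?c0 ` {1..i})" unfolding c_def by (rule conj_image[OF \<sigma>(1)])
    also have "\<dots> = A" using c0i \<sigma>(2) by simp
    finally show ?thesis .
  qed
  define R where "R = \<sigma> ` {1, Suc i, Suc (i + a)}"
  have R: "finite R" "R \<subseteq> {1..n}" "card R \<le> 3"
  proof -
    show "finite R" by (simp add: R_def)
    have "{1, Suc i, Suc (i + a)} \<subseteq> {1..n}" using ia by auto
    then show "R \<subseteq> {1..n}" unfolding R_def using permutes_image[OF \<sigma>(1)] by blast
    have "card R \<le> card {1, Suc i, Suc (i + a)}" unfolding R_def by (rule card_image_le) simp
    also have "\<dots> \<le> 3" by (simp add: card_insert_le_m1)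
    finally show "card R \<le> 3" .
  qed
  have disj: "A \<inter> ({1..n} - A) = {}" by blast
  have AU: "A \<union> ({1..n} - A) = {1..n}" using A(1) by blast
  have "card (prodperms A ({1..n} - A)) \<le> card (set_stabilizer n A \<inter> calPi n) * n ^ card R"
  proof (rule count_conj[OF cp R(1,2)])
    fix x assume x: "x \<in> {1..n}"
    define x' where "x' = inv' \<sigma> x"
    have x'1: "x' \<in> {1..n}" unfolding x'_def using x by (simp only: permutes_in_image[OF permutes_inv[OF \<sigma>(1)]])
    have x': "x' \<in> {1..n}" "\<sigma> x' = x"
      using x'1 by (auto simp: x'_def permutes_inverses[OF \<sigma>(1)])
    obtain r0 where r0: "r0 \<in> {1, Suc i, Suc (i + a)}" "orbit ?c0 x' = orbit ?c0 r0"
      using c3_reps[OF ia x'(1)] by blast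
    have "x \<in> orbit c x" using self_orbit[OF cp] .
    also have "orbit c x = \<sigma> ` orbit ?c0 x'" unfolding c_def x'(2)[symmetric] by (rule orbit_conj[OF \<sigma>(1)])
    also have "\<dots> = orbit c (\<sigma> r0)" unfolding c_def r0(2) by (rule orbit_conj[OF \<sigma>(1), symmetric])
    finally show "\<exists>r\<in>R. x \<in> orbit c r" using r0(1) by (auto simp: R_def)
  next
    fix q assume q: "q \<in> prodperms A ({1..n} - A)"
    have qp: "q permutes {1..n}" using prodperms_mem(1)[OF q disj] AU by simp
    have qA: "q ` A = A" using prodperms_mem(2)[OF q disj] .
    show "q permutes {1..n}" by (rule qp)
    have "conj q c ` A = conj q c ` (q ` A)" using qA by simp
    also have "\<dots> = q ` (c ` A)" by (rule conj_image[OF qp])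
    also have "\<dots> = A" using cA qA by simp
    finally have "conj q c ` A = A" .
    moreover have "conj q c permutes {1..n}" by (rule conj_permutes[OF cp qp])
    moreover have "cycle_type n (conj q c) \<in> Pi_types n" using cycle_type_conj[OF qp] ct by simp
    ultimately show "conj q c \<in> set_stabilizer n A \<inter> calPi n"
      by (simp add: set_stabilizer_def calPi_def sym_group_carrier)
  qed (rule finite_calPi)
  moreover have "card (prodperms A ({1..n} - A)) = fact (card A) * fact (n - card A)"
  proof -
    have "finite A" using A(1) finite_subset by blast
    moreover have "card ({1..n} - A) = n - card A" using A(1) \<open>finite A\<close> by (simp add: card_Diff_subset)
    ultimately show ?thesis using card_prodperms[OF disj] by simp
  qed
  moreover have "n ^ card R \<le> n ^ 3" using R(3) n by (intro power_increasing) auto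
  ultimately show ?thesis by (metis (no_types, lifting) mult_le_mono2 order_trans)
qed

lemma lb_two:
  fixes n :: nat and P :: "nat set set"
  assumes n: "36 \<le> n" "even n" and P: "block_partition n (n div 2) 2 P"
  shows "fact (n div 2) * fact (n div 2) \<le> card (partition_stabilizer n P \<inter> calPi n) * n"
proof -
  obtain m where m: "n = 2 * m" using n by blast
  have md: "n div 2 = m" using m by simp
  have Pp: "partition_on {1..n} P" "card P = 2" "\<forall>B\<in>P. card B = m"
    using P by (auto simp: block_partition_def md)
  obtain B1 B2 where B: "P = {B1, B2}" "B1 \<noteq> B2" using Pp(2) by (auto simp: card_2_iff)
  have U: "B1 \<union> B2 = {1..n}" using Pp(1) B(1) by (auto simp: partition_on_def)
  have D: "B1 \<inter> B2 = {}" using Pp(1) B by (auto simp: partition_on_def disjoint_def)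
  have cB: "card B1 = m" "card B2 = m" using Pp(3) B(1) by auto
  have OE: "Odd m \<union> Even m = {1..n}" "Odd m \<inter> Even m = {}" using Odd_Even_Un[of m] Odd_Even_disj[of m] m by auto
  have "Odd m \<subseteq> {1..n}" "B1 \<subseteq> {1..n}" "card (Odd m) = card B1" using OE U cB card_Odd by auto
  then obtain \<sigma> where \<sigma>: "\<sigma> permutes {1..n}" "\<sigma> ` Odd m = B1" using exists_perm_map by blast
  have Ev: "Even m = {1..n} - Odd m" using OE by blast
  have B2e: "B2 = {1..n} - B1" using U D by blast
  have \<sigma>E: "\<sigma> ` Even m = B2"
    unfolding Ev B2e image_set_diff[OF permutes_inj[OF \<sigma>(1)]] permutes_image[OF \<sigma>(1)] \<sigma>(2) ..
  let ?c0 = "c1 n"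
  have c0p: "?c0 permutes {1..n}" by (rule c1_permutes)
  have c0O: "?c0 ` Odd m = Even m" "?c0 ` Even m = Odd m" using c1_Odd c1_Even m by auto
  define c where "c = conj \<sigma> ?c0"
  have cp: "c permutes {1..n}" unfolding c_def by (rule conj_permutes[OF c0p \<sigma>(1)])
  have ct: "cycle_type n c \<in> Pi_types n"
  proof -
    have "cycle_type n c = {#n#}" unfolding c_def using cycle_type_conj[OF \<sigma>(1)] c1_type n by simp
    then show ?thesis by (simp add: Pi_types_def)
  qed
  have cB1: "c ` B1 = B2"
    unfolding c_def \<sigma>(2)[symmetric] conj_image[OF \<sigma>(1)] c0O \<sigma>E ..
  have cB2: "c ` B2 = B1"
    unfolding c_def \<sigma>E[symmetric] conj_image[OF \<sigma>(1)] c0O \<sigma>(2) ..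
  have "card (prodperms B1 B2) \<le> card (partition_stabilizer n P \<inter> calPi n) * n ^ card {\<sigma> 1}"
  proof (rule count_conj[OF cp])
    fix x assume x: "x \<in> {1..n}"
    have "orbit c (\<sigma> 1) = \<sigma> ` orbit ?c0 1" unfolding c_def by (rule orbit_conj[OF \<sigma>(1)])
    also have "\<dots> = {1..n}" using c1_orbit[of 1 n] n permutes_image[OF \<sigma>(1)] by simp
    finally show "\<exists>r\<in>{\<sigma> 1}. x \<in> orbit c r" using x by simp
  next
    show "{\<sigma> 1} \<subseteq> {1..n}" using n permutes_in_image[OF \<sigma>(1), of 1] by simp
  next
    fix q assume q: "q \<in> prodperms B1 B2"
    have qp: "q permutes {1..n}" using prodperms_mem(1)[OF q D] U by simp
    have qB: "q ` B1 = B1" "q ` B2 = B2" using prodperms_mem(2,3)[OF q D] by auto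
    show "q permutes {1..n}" by (rule qp)
    have "conj q c ` B1 = q ` (c ` B1)" using conj_image[OF qp, of c B1] qB by simp
    then have i1: "conj q c ` B1 = B2" using cB1 qB by simp
    have "conj q c ` B2 = q ` (c ` B2)" using conj_image[OF qp, of c B2] qB by simp
    then have i2: "conj q c ` B2 = B1" using cB2 qB by simp
    have "conj q c permutes {1..n}" by (rule conj_permutes[OF cp qp])
    moreover have "cycle_type n (conj q c) \<in> Pi_types n" using cycle_type_conj[OF qp] ct by simp
    ultimately show "conj q c \<in> partition_stabilizer n P \<inter> calPi n"
      using i1 i2 B(1) by (simp add: partition_stabilizer_def calPi_def sym_group_carrier)
  qed (simp_all add: finite_calPi)
  moreover have "card (prodperms B1 B2) = fact m * fact m"
  proof -
    have "finite B1" "finite B2" using U by (metis finite_Un finite_atLeastAtMost)+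
    then show ?thesis using card_prodperms[OF D] cB by simp
  qed
  ultimately show ?thesis using md by simp
qed


lemma fact_add_ge: "fact n * (n + 1) ^ j \<le> (fact (n + j) :: nat)"
proof (induction j)
  case 0 then show ?case by simp
next
  case (Suc j)
  have "fact n * (n + 1) ^ Suc j = (fact n * (n + 1) ^ j) * (n + 1)" by (simp add: algebra_simps)
  also have "\<dots> \<le> fact (n + j) * (n + j + 1)" by (rule mult_le_mono[OF Suc.IH]) simp
  also have "\<dots> = fact (n + Suc j)" by (simp add: algebra_simps)
  finally show ?case .
qed

lemma pow32: "4 \<le> l \<Longrightarrow> 81 * 2 ^ l \<le> 16 * (3::nat) ^ l"
proof (induction l rule: dec_induct)
  case base then show ?case by simp
next
  case (step l) then show ?case by simp
qed

lemma keyk: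
  fixes k l :: nat assumes k: "2 \<le> k" and l: "4 \<le> l"
  shows "(k + 1) ^ l * 2 ^ l * (k + 1) ^ 3 \<le> k ^ 3 * (k * l + 1) ^ l"
proof -
  have a: "8 * (k + 1) ^ 3 \<le> 27 * k ^ 3"
  proof -
    have "(2 * (k + 1)) ^ 3 \<le> (3 * k) ^ 3" using k by (intro power_mono) auto
    then show ?thesis unfolding power_mult_distrib by simp
  qed
  have b: "81 * (2 ^ l * (k + 1) ^ 3) \<le> 81 * (3 ^ l * k ^ 3)"
  proof -
    have "81 * (2 ^ l * (k + 1) ^ 3) = (81 * 2 ^ l) * (k + 1) ^ 3" by simp
    also have "\<dots> \<le> (16 * 3 ^ l) * (k + 1) ^ 3" by (rule mult_le_mono1[OF pow32[OF l]])
    also have "\<dots> = 3 ^ l * (2 * (8 * (k + 1) ^ 3))" by simp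
    also have "\<dots> \<le> 3 ^ l * (2 * (27 * k ^ 3))" using a by simp
    also have "\<dots> \<le> 81 * (3 ^ l * k ^ 3)" by simp
    finally show ?thesis .
  qed
  then have b': "2 ^ l * (k + 1) ^ 3 \<le> 3 ^ l * k ^ 3" by simp
  have c: "(3 * (k + 1)) ^ l \<le> (k * l + 1) ^ l"
  proof (rule power_mono)
    have "4 * k \<le> k * l" using l by simp
    then have "3 * k + 3 \<le> k * l + 1" using k by linarith
    then show "3 * (k + 1) \<le> k * l + 1" by simp
  qed simp
  have "(k + 1) ^ l * 2 ^ l * (k + 1) ^ 3 = (k + 1) ^ l * (2 ^ l * (k + 1) ^ 3)" by simp
  also have "\<dots> \<le> (k + 1) ^ l * (3 ^ l * k ^ 3)" using b' by simp
  also have "\<dots> = k ^ 3 * (3 * (k + 1)) ^ l" unfolding power_mult_distrib by (simp only: mult_ac)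
  also have "\<dots> \<le> k ^ 3 * (k * l + 1) ^ l" using c by simp
  finally show ?thesis .
qed

definition Pk :: "nat \<Rightarrow> nat \<Rightarrow> bool" where
  "Pk k l \<longleftrightarrow> fact k ^ l * fact l * (k * l) ^ 3 * 2 ^ (k * l) < (fact (k * l) :: nat)"

lemma stepk:
  assumes k: "2 \<le> k" and l: "4 \<le> l" and P: "Pk k l"
  shows "Pk (k + 1) l"
proof -
  define L where "L = fact k ^ l * fact l * (k * l) ^ 3 * 2 ^ (k * l)"
  define X where "X = (k + 1) ^ l * 2 ^ l * (k + 1) ^ 3"
  have L: "L < fact (k * l)" using P by (simp add: Pk_def L_def)
  have X0: "0 < X" by (simp add: X_def)
  have f1: "fact (k + 1) ^ l = (k + 1) ^ l * (fact k ^ l :: nat)"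
    by (simp only: fact_Suc Suc_eq_plus1[symmetric] of_nat_id power_mult_distrib)
  have f2: "((k + 1) * l) ^ 3 = (k + 1) ^ 3 * l ^ 3" "(k * l) ^ 3 = k ^ 3 * l ^ 3"
    by (simp_all only: power_mult_distrib)
  have f3: "(2::nat) ^ ((k + 1) * l) = 2 ^ (k * l) * 2 ^ l"
    by (simp only: add_mult_distrib power_add mult_1)
  have eq: "k ^ 3 * (fact (k + 1) ^ l * fact l * ((k + 1) * l) ^ 3 * 2 ^ ((k + 1) * l)) = L * X"
    unfolding L_def X_def f1 f2 f3 by (simp only: mult_ac)
  have "L * X < fact (k * l) * X" using L X0 by simp
  also have "\<dots> \<le> fact (k * l) * (k ^ 3 * (k * l + 1) ^ l)"
    using keyk[OF k l] by (simp add: X_def)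
  also have "\<dots> = k ^ 3 * (fact (k * l) * (k * l + 1) ^ l)" by simp
  also have "\<dots> \<le> k ^ 3 * fact (k * l + l)" using fact_add_ge[of "k * l" l] by simp
  finally have "k ^ 3 * (fact (k + 1) ^ l * fact l * ((k + 1) * l) ^ 3 * 2 ^ ((k + 1) * l)) < k ^ 3 * fact ((k + 1) * l)"
    using eq by (simp add: algebra_simps)
  then show ?thesis by (simp add: Pk_def)
qed

lemma k2_key:
  fixes l :: nat assumes l: "18 \<le> l"
  shows "2 * (l + 1) * 4 * (l + 1) ^ 3 \<le> l ^ 3 * (2 * l + 1) ^ 2"
proof -
  have "(4 * (l + 1)) ^ 3 \<le> (5 * l) ^ 3" using l by (intro power_mono) auto
  then have a: "64 * (l + 1) ^ 3 \<le> 125 * l ^ 3" unfolding power_mult_distrib by simp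
  then have a': "(l + 1) ^ 3 \<le> 2 * l ^ 3" by linarith
  have b: "16 * (l + 1) \<le> (2 * l + 1) ^ 2"
  proof -
    have "16 * (l + 1) \<le> (2 * l + 1) * (2 * l + 1)" using l by (intro order_trans[OF _ mult_le_mono[of 16 "2*l+1" "l+1" "2*l+1"]]) auto
    then show ?thesis by (simp add: power2_eq_square)
  qed
  have "2 * (l + 1) * 4 * (l + 1) ^ 3 = 8 * (l + 1) * (l + 1) ^ 3" by simp
  also have "\<dots> \<le> 8 * (l + 1) * (2 * l ^ 3)" using a' by (intro mult_le_mono) auto
  also have "\<dots> = l ^ 3 * (16 * (l + 1))" by simp
  also have "\<dots> \<le> l ^ 3 * (2 * l + 1) ^ 2" using b by simp
  finally show ?thesis .
qed

lemma Pk2: "18 \<le> l \<Longrightarrow> Pk 2 l"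
proof (induction l rule: dec_induct)
  case base then show ?case by (simp add: Pk_def fact_numeral)
next
  case (step l)
  define L where "L = fact 2 ^ l * fact l * (2 * l) ^ 3 * (2::nat) ^ (2 * l)"
  define Y where "Y = 2 * (l + 1) * 4 * (l + 1) ^ 3"
  have L: "L < fact (2 * l)" using step by (simp add: Pk_def L_def)
  have Y0: "0 < Y" by (simp add: Y_def)
  have f1: "fact 2 ^ (l + 1) = 2 * (fact 2 ^ l :: nat)" by simp
  have f2: "fact (l + 1) = (l + 1) * (fact l :: nat)" by simp
  have f3: "(2 * (l + 1)) ^ 3 = 8 * (l + 1) ^ 3" "(2 * l) ^ 3 = 8 * l ^ 3"
    by (simp_all only: power_mult_distrib) simp_all
  have f4: "(2::nat) ^ (2 * (l + 1)) = 2 ^ (2 * l) * 4"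
    by (simp add: power_add)
  have eq: "l ^ 3 * (fact 2 ^ (l + 1) * fact (l + 1) * (2 * (l + 1)) ^ 3 * 2 ^ (2 * (l + 1))) = L * Y"
    unfolding L_def Y_def f1 f2 f3 f4 by (simp only: mult_ac)
  have "L * Y < fact (2 * l) * Y" using L Y0 by simp
  also have "\<dots> \<le> fact (2 * l) * (l ^ 3 * (2 * l + 1) ^ 2)"
    using k2_key[OF step(1)] by (simp add: Y_def)
  also have "\<dots> = l ^ 3 * (fact (2 * l) * (2 * l + 1) ^ 2)" by simp
  also have "\<dots> \<le> l ^ 3 * fact (2 * l + 2)" using fact_add_ge[of "2 * l" 2] by simp
  finally have "l ^ 3 * (fact 2 ^ (l + 1) * fact (l + 1) * (2 * (l + 1)) ^ 3 * 2 ^ (2 * (l + 1))) < l ^ 3 * fact (2 * (l + 1))"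
    using eq by simp
  then show ?case by (simp add: Pk_def)
qed

lemma Pk_from:
  assumes "k0 \<le> k" "Pk k0 l" "2 \<le> k0" "4 \<le> l" shows "Pk k l"
  using assms(1)
proof (induction k rule: dec_induct)
  case base then show ?case using assms(2) by simp
next
  case (step k) then show ?case using stepk[of k l] assms by simp
qed

lemma Pk_all:
  assumes "2 \<le> k" "4 \<le> l" "36 \<le> k * l" shows "Pk k l"
proof (cases "18 \<le> l")
  case True then show ?thesis using Pk_from[of 2 k l] Pk2 assms by simp
next
  case False
  then have "l = 4 \<or> l = 5 \<or> l = 6 \<or> l = 7 \<or> l = 8 \<or> l = 9 \<or> l = 10 \<or> l = 11 \<or> l = 12 \<or> l = 13 \<or> l = 14 \<or> l = 15 \<or> l = 16 \<or> l = 17" using assms(2) False by presburger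
  then show ?thesis
  proof (elim disjE)
    assume "l = 4" then show ?thesis using Pk_from[of 9 k l] assms(3) by (simp add: Pk_def fact_numeral)
  next
    assume "l = 5" then show ?thesis using Pk_from[of 8 k l] assms(3) by (simp add: Pk_def fact_numeral)
  next
    assume "l = 6" then show ?thesis using Pk_from[of 6 k l] assms(3) by (simp add: Pk_def fact_numeral)
  next
    assume "l = 7" then show ?thesis using Pk_from[of 6 k l] assms(3) by (simp add: Pk_def fact_numeral)
  next
    assume "l = 8" then show ?thesis using Pk_from[of 5 k l] assms(3) by (simp add: Pk_def fact_numeral)
  next
    assume "l = 9" then show ?thesis using Pk_from[of 4 k l] assms(3) by (simp add: Pk_def fact_numeral)
  next
    assume "l = 10" then show ?thesis using Pk_from[of 4 k l] assms(3) by (simp add: Pk_def fact_numeral)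
  next
    assume "l = 11" then show ?thesis using Pk_from[of 4 k l] assms(3) by (simp add: Pk_def fact_numeral)
  next
    assume "l = 12" then show ?thesis using Pk_from[of 3 k l] assms(3) by (simp add: Pk_def fact_numeral)
  next
    assume "l = 13" then show ?thesis using Pk_from[of 3 k l] assms(3) by (simp add: Pk_def fact_numeral)
  next
    assume "l = 14" then show ?thesis using Pk_from[of 3 k l] assms(3) by (simp add: Pk_def fact_numeral)
  next
    assume "l = 15" then show ?thesis using Pk_from[of 3 k l] assms(3) by (simp add: Pk_def fact_numeral)
  next
    assume "l = 16" then show ?thesis using Pk_from[of 3 k l] assms(3) by (simp add: Pk_def fact_numeral)
  next
    assume "l = 17" then show ?thesis using Pk_from[of 3 k l] assms(3) by (simp add: Pk_def fact_numeral)
  qed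
qed

lemma l3_key: fixes t :: nat assumes t: "6 \<le> t" shows "64 * (t + 1) ^ 9 \<le> 729 * t ^ 9"
proof -
  have "(6 * (t + 1)) ^ 9 \<le> (7 * t) ^ 9" using t by (intro power_mono) auto
  then have "10077696 * (t + 1) ^ 9 \<le> 40353607 * t ^ 9" unfolding power_mult_distrib by simp
  then show ?thesis by linarith
qed

lemma fact_2step: "fact (m + 2) \<le> (m + 2) ^ 2 * (fact m :: nat)"
proof -
  have "fact (m + 2) = (m + 2) * ((m + 1) * (fact m :: nat))" by (simp add: algebra_simps)
  also have "\<dots> \<le> (m + 2) * ((m + 2) * fact m)" by (intro mult_le_mono) auto
  finally show ?thesis by (simp only: power2_eq_square mult.assoc)
qed

definition R3 :: "nat \<Rightarrow> bool" where
  "R3 t \<longleftrightarrow> 6 * fact (2 * t) ^ 3 * (6 * t) ^ 3 < (fact (3 * t) ^ 2 :: nat)"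

lemma R3_all: "6 \<le> t \<Longrightarrow> R3 t"
proof (induction t rule: dec_induct)
  case base then show ?case by (simp add: R3_def fact_numeral)
next
  case (step t)
  define L :: nat where "L = 6 * fact (2 * t) ^ 3 * (6 * t) ^ 3"
  define F :: nat where "F = fact (3 * t) ^ 2"
  have L: "L < F" using step by (simp add: R3_def L_def F_def)
  have t1: "1 \<le> t" using step(1) by simp
  have a: "fact (2 * t + 2) ^ 3 \<le> ((2 * t + 2) ^ 2 * fact (2 * t)) ^ 3"
    by (intro power_mono fact_2step) simp
  have "t ^ 3 * (6 * fact (2 * (t + 1)) ^ 3 * (6 * (t + 1)) ^ 3)
        = 6 * fact (2 * t + 2) ^ 3 * (t ^ 3 * (6 * (t + 1)) ^ 3)" by (simp add: algebra_simps)
  also have "\<dots> \<le> 6 * ((2 * t + 2) ^ 2 * fact (2 * t)) ^ 3 * (t ^ 3 * (6 * (t + 1)) ^ 3)"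
    using a by (intro mult_le_mono) auto
  also have "\<dots> = L * (64 * (t + 1) ^ 9)"
  proof -
    have e1: "((2 * t + 2) ^ 2 * fact (2 * t)) ^ 3 = 64 * (t + 1) ^ 6 * (fact (2 * t) :: nat) ^ 3"
    proof -
      have "(2 * t + 2) = 2 * (t + 1)" by simp
      then show ?thesis by (simp only: power_mult_distrib power_mult[symmetric]) simp
    qed
    have e2: "(6 * (t + 1)) ^ 3 = 216 * (t + 1) ^ 3" "(6 * t) ^ 3 = 216 * t ^ 3"
      by (simp_all only: power_mult_distrib) simp_all
    have e3: "(t + 1) ^ 9 = (t + 1) ^ 6 * (t + 1) ^ 3" by (simp add: power_add[symmetric])
    show ?thesis unfolding e1 e2 e3 L_def by (simp only: mult_ac)
  qed
  also have "\<dots> < F * (64 * (t + 1) ^ 9)" using L by simp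
  also have "\<dots> \<le> F * (729 * t ^ 9)" using l3_key[OF step(1)] by simp
  also have "\<dots> \<le> F * (t ^ 3 * (3 * t + 1) ^ 6)"
  proof -
    have "(3 * t) ^ 6 \<le> (3 * t + 1) ^ 6" by (intro power_mono) auto
    then have "729 * t ^ 6 \<le> (3 * t + 1) ^ 6" unfolding power_mult_distrib by simp
    then have "729 * t ^ 9 \<le> t ^ 3 * (3 * t + 1) ^ 6"
      using mult_le_mono2[of "729 * t ^ 6" "(3 * t + 1) ^ 6" "t ^ 3"] by (simp add: power_add[symmetric] algebra_simps)
    then show ?thesis by simp
  qed
  also have "\<dots> = t ^ 3 * (fact (3 * t) * (3 * t + 1) ^ 3) ^ 2"
    unfolding F_def by (simp add: power_mult_distrib power_mult[symmetric] algebra_simps)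
  also have "\<dots> \<le> t ^ 3 * fact (3 * t + 3) ^ 2"
    using fact_add_ge[of "3 * t" 3] by (intro mult_le_mono power_mono) auto
  finally have "t ^ 3 * (6 * fact (2 * (t + 1)) ^ 3 * (6 * (t + 1)) ^ 3) < t ^ 3 * fact (3 * t + 3) ^ 2" .
  then have "6 * fact (2 * (t + 1)) ^ 3 * (6 * (t + 1)) ^ 3 < fact (3 * t + 3) ^ 2" by simp
  moreover have "3 * (t + 1) = 3 * t + 3" "Suc t = t + 1" by simp_all
  ultimately show ?case unfolding R3_def by metis
qed

lemma fact_pair_mono:
  fixes m i :: nat assumes "i \<le> m"
  shows "fact m * fact m \<le> fact i * (fact (2 * m - i) :: nat)"
proof -
  have "\<forall>i. i + d = m \<longrightarrow> fact m * fact m \<le> fact i * (fact (2 * m - i) :: nat)" for d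
  proof (induction d)
    case 0 then show ?case by (simp add: mult_2)
  next
    case (Suc d)
    show ?case
    proof (intro allI impI)
      fix i assume i: "i + Suc d = m"
      have "(i + 1) + d = m" using i by simp
      then have "fact m * fact m \<le> fact (i + 1) * (fact (2 * m - (i + 1)) :: nat)"
        using Suc.IH by blast
      also have "\<dots> \<le> fact i * fact (2 * m - i)"
      proof -
        define j where "j = 2 * m - (i + 1)"
        have j: "2 * m - i = j + 1" "i + 1 \<le> j + 1" using i by (auto simp: j_def)
        have "fact (i + 1) * fact j = (i + 1) * (fact i * (fact j :: nat))" by (simp add: algebra_simps)
        also have "\<dots> \<le> (j + 1) * (fact i * fact j)" using j(2) by (intro mult_le_mono) auto
        also have "\<dots> = fact i * fact (j + 1)" by (simp add: algebra_simps)
        finally show ?thesis unfolding j_def[symmetric] j(1) .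
      qed
      finally show "fact m * fact m \<le> fact i * (fact (2 * m - i) :: nat)" .
    qed
  qed
  then show ?thesis using assms by (metis le_add_diff_inverse)
qed

lemma fact_n_le: "fact (2 * m) \<le> 2 ^ (2 * m) * (fact m * (fact m :: nat))"
proof -
  have "fact m * fact (2 * m - m) * (2 * m choose m) = fact (2 * m)"
    by (rule binomial_fact_lemma) simp
  then have "fact (2 * m) = fact m * fact m * (2 * m choose m)" by (simp add: mult_2)
  also have "\<dots> \<le> fact m * fact m * 2 ^ (2 * m)" by (intro mult_le_mono binomial_le_pow2) auto
  finally show ?thesis by (simp only: mult.commute)
qed

lemma main_ineq:
  fixes n k l :: nat
  assumes n: "36 \<le> n" "n mod 6 = 0" and kl: "k * l = n" "2 \<le> k" "3 \<le> l"
  shows "fact l * fact k ^ l * n ^ 3 < fact (n div 2) * fact (n div 2)"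
proof (cases "l = 3")
  case True
  then have "even k" using n kl by presburger
  then obtain t where t: "k = 2 * t" by blast
  have t6: "6 \<le> t" using n kl True t by simp
  have "R3 t" using R3_all[OF t6] .
  moreover have "n = 6 * t" "n div 2 = 3 * t" using kl True t by auto
  ultimately show ?thesis using True t by (simp add: R3_def power2_eq_square fact_numeral mult_ac)
next
  case False
  then have l4: "4 \<le> l" using kl by simp
  have P: "Pk k l" using Pk_all[OF kl(2) l4] n kl by simp
  have "even n" using n by presburger
  then obtain m where m: "n = 2 * m" by blast
  have "2 ^ n * (fact l * fact k ^ l * n ^ 3) < fact n" using P kl by (simp add: Pk_def mult_ac)
  also have "\<dots> \<le> 2 ^ n * (fact m * fact m)" using fact_n_le[of m] m by simp
  finally show ?thesis using m by simp
qed


theorem lemma3p10: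
  fixes n :: nat and M :: "(nat \<Rightarrow> nat) set"
  assumes "n > 30" and "n mod 6 = 0"
    and "maximal_subgroup (sym_group n) M"
    and "imprimitive_stab n M"
    and "M \<notin> calH n"
  shows "\<forall>H\<in>calH n. card (M \<inter> calPi n) < card (H \<inter> calPi n)"
proof -
  have n36: "36 \<le> n" using assms(1,2) by presburger
  have ev: "even n" using assms(2) by presburger
  obtain k l P where kl: "k * l = n" "2 \<le> k" "2 \<le> l" "block_partition n k l P"
    and MP: "M = partition_stabilizer n P"
    using assms(4) by (auto simp: imprimitive_stab_def)
  have l3: "3 \<le> l"
  proof (rule ccontr)
    assume "\<not> 3 \<le> l"
    then have "l = 2" using kl by simp
    then have "k = n div 2" using kl by simp
    then have "M \<in> calH n" using kl \<open>l = 2\<close> MP by (auto simp: calH_def)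
    then show False using assms(5) by simp
  qed
  define m :: nat where "m = n div 2"
  define f :: nat where "f = fact l * fact k ^ l"
  have Pp: "partition_on {1..n} P" "card P = l" "\<forall>B\<in>P. card B = k"
    using kl(4) by (auto simp: block_partition_def)
  have cardM: "card M \<le> f" unfolding MP f_def using card_part_stab[OF Pp(1,3)] Pp(2) by simp
  have finM: "finite M" unfolding MP
    by (rule finite_subset[OF _ finite_permutations[of "{1..n}"]])
       (auto simp: partition_stabilizer_def sym_group_carrier)
  have cMP: "card (M \<inter> calPi n) \<le> f"
    using card_mono[OF finM, of "M \<inter> calPi n"] cardM by simp
  have ineq: "f * n ^ 3 < fact m * fact m"
    using main_ineq[OF n36 assms(2) kl(1,2) l3] by (simp add: f_def m_def)
  have n1: "1 \<le> n" using n36 by simp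
  have key: "card (M \<inter> calPi n) < card (H \<inter> calPi n)"
    if "fact m * fact m \<le> card (H \<inter> calPi n) * n ^ e" "e \<le> 3" for H e
  proof (rule ccontr)
    assume "\<not> ?thesis"
    then have "card (H \<inter> calPi n) \<le> f" using cMP by simp
    then have "card (H \<inter> calPi n) * n ^ e \<le> f * n ^ 3"
      using that(2) n1 by (intro mult_le_mono power_increasing) auto
    then show False using that(1) ineq by simp
  qed
  show ?thesis
  proof
    fix H assume H: "H \<in> calH n"
    then consider (two) P' where "H = partition_stabilizer n P'" "block_partition n (n div 2) 2 P'"
      | (alt) "H = carrier (alt_group n)"
      | (set) A where "H = set_stabilizer n A" "A \<subseteq> {1..n}" "1 \<le> card A" "card A \<le> n div 3 - 1"
      unfolding calH_def by blast
    then show "card (M \<inter> calPi n) < card (H \<inter> calPi n)"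
    proof cases
      case two
      show ?thesis
        by (rule key[of H 1]) (use lb_two[OF n36 ev two(2)] two(1) in \<open>simp_all add: m_def\<close>)
    next
      case alt
      have "fact m * fact m \<le> (fact n :: nat)"
        using fact_pair_mono[of 0 m] ev by (simp add: m_def)
      also have "\<dots> \<le> card (H \<inter> calPi n) * n ^ 2" using lb_alt[OF n36 ev] alt by simp
      finally show ?thesis by (rule key) simp
    next
      case set
      have im: "card A \<le> m" using set(4) by (simp add: m_def)
      have "fact m * fact m \<le> fact (card A) * (fact (2 * m - card A) :: nat)" by (rule fact_pair_mono[OF im])
      also have "2 * m = n" using ev by (simp add: m_def)
      also have "fact (card A) * fact (n - card A) \<le> card (H \<inter> calPi n) * n ^ 3"
        using lb_set[OF n36 assms(2) set(2-4)] set(1) by simp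
      finally show ?thesis by (rule key) simp
    qed
  qed
qed

end
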